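(* Let $\mathbf{P}_A,\mathbf{P}_B,\mathbf{Q}_A,\mathbf{Q}_B\in\mathbb{R}^{n\times n}$ be symmetric positive definite and for $\omega\in[0,1]$, $\bar\omega=1-\omega$, let $\mathbf{B}_{\mathrm{SCI}}(\omega)=\left(\omega(\mathbf{P}_A+\omega\mathbf{Q}_A)^{-1}+\bar\omega(\mathbf{P}_B+\bar\omega\mathbf{Q}_B)^{-1}\right)^{-1}$. Then the function $\omega\mapsto\operatorname{tr}(\mathbf{B}_{\mathrm{SCI}}(\omega))$ is convex on $[0,1]$. *)

theory Defs
  imports "HOL-Analysis.Analysis"
begin

definition spd :: "real^'n^'n \<Rightarrow> bool" where
  "spd A \<longleftrightarrow> transpose A = A \<and> (\<forall>x. x \<noteq> 0 \<longrightarrow> x \<bullet> (A *v x) > 0)"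

definition B_SCI :: "real^'n^'n \<Rightarrow> real^'n^'n \<Rightarrow> real^'n^'n \<Rightarrow> real^'n^'n \<Rightarrow> real \<Rightarrow> real^'n^'n" where
  "B_SCI PA PB QA QB \<omega> =
     matrix_inv (\<omega> *\<^sub>R matrix_inv (PA + \<omega> *\<^sub>R QA)
               + (1 - \<omega>) *\<^sub>R matrix_inv (PB + (1 - \<omega>) *\<^sub>R QB))"

end

theory Submission
  imports Defs
begin

definition qf :: "real^'n^'n \<Rightarrow> real^'n \<Rightarrow> real" where
  "qf M x = x \<bullet> (M *v x)"

definition symm :: "real^'n^'n \<Rightarrow> bool" where
  "symm M \<longleftrightarrow> (\<forall>x y. x \<bullet> (M *v y) = y \<bullet> (M *v x))"

definition psd :: "real^'n^'n \<Rightarrow> bool" where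
  "psd M \<longleftrightarrow> (\<forall>x. 0 \<le> qf M x)"

lemma transpose_symm:
  fixes M :: "real^'n^'n"
  assumes "transpose M = M" shows "symm M"
  unfolding symm_def
proof (intro allI)
  fix x y :: "real^'n"
  have "x \<bullet> (M *v y) = (x v* M) \<bullet> y" by (simp add: dot_lmul_matrix)
  also have "x v* M = M *v x" by (metis assms vector_transpose_matrix)
  finally show "x \<bullet> (M *v y) = y \<bullet> (M *v x)" by (simp add: inner_commute)
qed

lemma smat_vec: fixes M :: "real^'n^'n" shows "(c *\<^sub>R M) *v x = c *\<^sub>R (M *v x)"
  by (simp add: scaleR_matrix_vector_assoc)

lemma qf_scale: "qf M (c *\<^sub>R x) = c^2 * qf M x"
  by (simp add: qf_def matrix_vector_mult_scaleR power2_eq_square)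

lemma qf_add_mat: "qf (P + c *\<^sub>R Q) x = qf P x + c * qf Q x"
  by (simp add: qf_def matrix_vector_mult_add_rdistrib smat_vec inner_add_right)

lemma symm_add_mat: "symm P \<Longrightarrow> symm Q \<Longrightarrow> symm (P + c *\<^sub>R Q)"
  unfolding symm_def by (simp add: matrix_vector_mult_add_rdistrib smat_vec inner_add_right)

lemma qf_lin:
  assumes "symm M"
  shows "qf M (u *\<^sub>R y1 + v *\<^sub>R y2) = u^2 * qf M y1 + 2 * u * v * (y1 \<bullet> (M *v y2)) + v^2 * qf M y2"
proof -
  have s: "y2 \<bullet> (M *v y1) = y1 \<bullet> (M *v y2)" using assms unfolding symm_def by metis
  show ?thesis
    unfolding qf_def
    by (simp add: matrix_vector_right_distrib matrix_vector_mult_scaleR inner_add_left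
        inner_add_right s power2_eq_square algebra_simps)
qed

lemma real_id_aux:
  fixes u v q1 q2 c :: real
  assumes "v = 1 - u"
  shows "u * q1 + v * q2 - (u^2 * q1 + 2 * u * v * c + v^2 * q2) = u * v * (q1 - 2 * c + q2)"
  unfolding assms by (simp add: power2_eq_square algebra_simps)

lemma qf_quad_convex:
  assumes "symm M" "psd M" "0 \<le> u" "0 \<le> v" "u + v = 1"
  shows "qf M (u *\<^sub>R y1 + v *\<^sub>R y2) \<le> u * qf M y1 + v * qf M y2"
proof -
  have d: "qf M (1 *\<^sub>R y1 + (-1) *\<^sub>R y2) = qf M y1 - 2 * (y1 \<bullet> (M *v y2)) + qf M y2"
    using qf_lin[OF assms(1), of 1 y1 "-1" y2] by simp
  have "0 \<le> qf M (1 *\<^sub>R y1 + (-1) *\<^sub>R y2)" using assms(2) psd_def by blast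
  hence "0 \<le> u * v * (qf M y1 - 2 * (y1 \<bullet> (M *v y2)) + qf M y2)"
    using d assms(3,4) by simp
  moreover have "v = 1 - u" using assms by simp
  then have "u * qf M y1 + v * qf M y2 - (u^2 * qf M y1 + 2 * u * v * (y1 \<bullet> (M *v y2)) + v^2 * qf M y2)
     = u * v * (qf M y1 - 2 * (y1 \<bullet> (M *v y2)) + qf M y2)"
    by (rule real_id_aux)
  ultimately have "u^2 * qf M y1 + 2 * u * v * (y1 \<bullet> (M *v y2)) + v^2 * qf M y2 \<le> u * qf M y1 + v * qf M y2"
    by linarith
  then show ?thesis
    unfolding qf_lin[OF assms(1)] .
qed

lemma persp:
  assumes "symm M" "psd M" "0 \<le> s1" "0 \<le> s2"
  and a_def: "a = (if s1 + s2 = 0 then 0 else (1/(s1+s2)) *\<^sub>R (s1 *\<^sub>R a1 + s2 *\<^sub>R a2))"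
  shows "(s1 + s2) * qf M a \<le> s1 * qf M a1 + s2 * qf M a2"
    and "(s1 + s2) *\<^sub>R a = s1 *\<^sub>R a1 + s2 *\<^sub>R a2"
proof -
  have "(s1 + s2) * qf M a \<le> s1 * qf M a1 + s2 * qf M a2 \<and> (s1 + s2) *\<^sub>R a = s1 *\<^sub>R a1 + s2 *\<^sub>R a2"
  proof (cases "s1 + s2 = 0")
    case True
    then have "s1 = 0" "s2 = 0" using assms by auto
    then show ?thesis by (simp add: a_def)
  next
    case False
    let ?s = "s1 + s2"
    have sp: "?s > 0" using False assms by simp
    have aeq: "a = (s1/?s) *\<^sub>R a1 + (s2/?s) *\<^sub>R a2" using False by (simp add: a_def scaleR_add_right)
    have "qf M a \<le> (s1/?s) * qf M a1 + (s2/?s) * qf M a2"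
      unfolding aeq
      by (rule qf_quad_convex[OF assms(1,2)]) (use assms sp in \<open>auto simp: add_divide_distrib[symmetric]\<close>)
    hence "?s * qf M a \<le> ?s * ((s1/?s) * qf M a1 + (s2/?s) * qf M a2)"
      using sp by (simp add: mult_left_mono)
    also have "\<dots> = (?s * (s1/?s)) * qf M a1 + (?s * (s2/?s)) * qf M a2" by (simp add: algebra_simps)
    also have "\<dots> = s1 * qf M a1 + s2 * qf M a2" using sp by simp
    finally show ?thesis using False by (simp add: a_def)
  qed
  then show "(s1 + s2) * qf M a \<le> s1 * qf M a1 + s2 * qf M a2"
    and "(s1 + s2) *\<^sub>R a = s1 *\<^sub>R a1 + s2 *\<^sub>R a2" by auto
qed

lemma qf_shift:
  assumes "symm M"
  shows "qf M a' = qf M a + 2 * ((a' - a) \<bullet> (M *v a)) + qf M (a' - a)"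
proof -
  have "qf M (1 *\<^sub>R a + 1 *\<^sub>R (a' - a)) = 1^2 * qf M a + 2 * 1 * 1 * (a \<bullet> (M *v (a' - a))) + 1^2 * qf M (a' - a)"
    by (rule qf_lin[OF assms])
  moreover have "a \<bullet> (M *v (a' - a)) = (a' - a) \<bullet> (M *v a)" using assms unfolding symm_def by metis
  ultimately show ?thesis by simp
qed

lemma opt:
  fixes MA MB IA IB S Bm :: "real^'n^'n" and x :: "real^'n"
  assumes sA: "symm MA" and sB: "symm MB" and pA: "psd MA" and pB: "psd MB"
    and iA: "MA ** IA = mat 1" and iB: "MB ** IB = mat 1"
    and Sdef: "S = w *\<^sub>R IA + (1-w) *\<^sub>R IB" and iS: "S ** Bm = mat 1"
    and w0: "0 \<le> w" and w1: "w \<le> 1"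
    and udef: "u = Bm *v x" and adef: "a = IA *v u" and bdef: "b = IB *v u"
  shows "w *\<^sub>R a + (1-w) *\<^sub>R b = x"
    and "x \<bullet> (Bm *v x) = w * qf MA a + (1-w) * qf MB b"
    and "\<forall>a' b'. w *\<^sub>R a' + (1-w) *\<^sub>R b' = x \<longrightarrow> x \<bullet> (Bm *v x) \<le> w * qf MA a' + (1-w) * qf MB b'"
proof -
  have MAa: "MA *v a = u" unfolding adef by (simp add: matrix_vector_mul_assoc iA)
  have MBb: "MB *v b = u" unfolding bdef by (simp add: matrix_vector_mul_assoc iB)
  have Su: "S *v u = w *\<^sub>R a + (1-w) *\<^sub>R b"
    unfolding Sdef adef bdef by (simp add: matrix_vector_mult_add_rdistrib smat_vec)
  have Sux: "S *v u = x" unfolding udef by (simp add: matrix_vector_mul_assoc iS)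
  show sum: "w *\<^sub>R a + (1-w) *\<^sub>R b = x" using Su Sux by simp
  have g: "x \<bullet> (Bm *v x) = x \<bullet> u" using udef by simp
  also have "\<dots> = w * (a \<bullet> u) + (1-w) * (b \<bullet> u)"
    by (simp add: sum[symmetric] inner_add_left)
  also have "\<dots> = w * qf MA a + (1-w) * qf MB b"
    by (simp add: qf_def MAa MBb)
  finally show val: "x \<bullet> (Bm *v x) = w * qf MA a + (1-w) * qf MB b" .
  show "\<forall>a' b'. w *\<^sub>R a' + (1-w) *\<^sub>R b' = x \<longrightarrow> x \<bullet> (Bm *v x) \<le> w * qf MA a' + (1-w) * qf MB b'"
  proof (intro allI impI)
    fix a' b' assume h: "w *\<^sub>R a' + (1-w) *\<^sub>R b' = x"
    have z: "w *\<^sub>R (a' - a) + (1-w) *\<^sub>R (b' - b) = 0"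
    proof -
      have "w *\<^sub>R (a' - a) + (1-w) *\<^sub>R (b' - b) = (w *\<^sub>R a' + (1-w) *\<^sub>R b') - (w *\<^sub>R a + (1-w) *\<^sub>R b)"
        by (simp add: scaleR_diff_right)
      then show ?thesis using h sum by simp
    qed
    have z2: "w * ((a' - a) \<bullet> u) + (1-w) * ((b' - b) \<bullet> u) = 0"
    proof -
      have "(w *\<^sub>R (a' - a) + (1-w) *\<^sub>R (b' - b)) \<bullet> u = 0" using z by simp
      then show ?thesis by (simp only: inner_add_left inner_scaleR_left)
    qed
    have ea: "qf MA a' = qf MA a + 2 * ((a' - a) \<bullet> u) + qf MA (a' - a)"
      using qf_shift[OF sA, of a' a] MAa by simp
    have eb: "qf MB b' = qf MB b + 2 * ((b' - b) \<bullet> u) + qf MB (b' - b)"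
      using qf_shift[OF sB, of b' b] MBb by simp
    have n1: "0 \<le> w * qf MA (a' - a)" using pA w0 unfolding psd_def by simp
    have n2: "0 \<le> (1-w) * qf MB (b' - b)" using pB w1 unfolding psd_def by simp
    have "w * qf MA a' + (1-w) * qf MB b' = (w * qf MA a + (1-w) * qf MB b)
        + 2 * (w * ((a' - a) \<bullet> u) + (1-w) * ((b' - b) \<bullet> u))
        + (w * qf MA (a' - a) + (1-w) * qf MB (b' - b))"
      unfolding ea eb by (simp add: algebra_simps)
    then show "x \<bullet> (Bm *v x) \<le> w * qf MA a' + (1-w) * qf MB b'"
      using val z2 n1 n2 by (smt (verit))
  qed
qed


lemma conv_abs:
  fixes P Q R T :: "real^'n^'n" and g :: "real \<Rightarrow> real" and x :: "real^'n"
  assumes sP: "symm P" and pP: "psd P" and sQ: "symm Q" and pQ: "psd Q"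
    and sR: "symm R" and pR: "psd R" and sT: "symm T" and pT: "psd T"
    and opt: "\<And>w. w \<in> {0..1} \<Longrightarrow> \<exists>a b. w *\<^sub>R a + (1-w) *\<^sub>R b = x
        \<and> g w = w * qf P a + w^2 * qf Q a + (1-w) * qf R b + (1-w)^2 * qf T b
        \<and> (\<forall>a' b'. w *\<^sub>R a' + (1-w) *\<^sub>R b' = x \<longrightarrow>
              g w \<le> w * qf P a' + w^2 * qf Q a' + (1-w) * qf R b' + (1-w)^2 * qf T b')"
  shows "convex_on {0..1} g"
  unfolding convex_on_def
proof (intro conjI ballI allI impI)
  show "convex {0..(1::real)}" by (rule convex_real_interval)
  fix w1 w2 :: real and u v :: real
  assume w1: "w1 \<in> {0..1}" and w2: "w2 \<in> {0..1}" and u: "0 \<le> u" and v: "0 \<le> v" and uv: "u + v = 1"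
  obtain a1 b1 where c1: "w1 *\<^sub>R a1 + (1-w1) *\<^sub>R b1 = x"
    and g1: "g w1 = w1 * qf P a1 + w1^2 * qf Q a1 + (1-w1) * qf R b1 + (1-w1)^2 * qf T b1"
    using opt[OF w1] by blast
  obtain a2 b2 where c2: "w2 *\<^sub>R a2 + (1-w2) *\<^sub>R b2 = x"
    and g2: "g w2 = w2 * qf P a2 + w2^2 * qf Q a2 + (1-w2) * qf R b2 + (1-w2)^2 * qf T b2"
    using opt[OF w2] by blast
  define w where "w = u * w1 + v * w2"
  have w01: "w \<in> {0..1}" using w1 w2 u v uv unfolding w_def
    by (auto intro: convex_bound_le mult_nonneg_nonneg add_nonneg_nonneg)
  define s1 where "s1 = u * w1"
  define s2 where "s2 = v * w2"
  define r1 where "r1 = u * (1 - w1)"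
  define r2 where "r2 = v * (1 - w2)"
  have s0: "0 \<le> s1" "0 \<le> s2" "0 \<le> r1" "0 \<le> r2" using w1 w2 u v
    by (auto simp: s1_def s2_def r1_def r2_def)
  have ss: "s1 + s2 = w" by (simp add: s1_def s2_def w_def)
  have rr: "r1 + r2 = 1 - w" using uv by (simp add: r1_def r2_def w_def algebra_simps)
  define a where "a = (if s1 + s2 = 0 then 0 else (1/(s1+s2)) *\<^sub>R (s1 *\<^sub>R a1 + s2 *\<^sub>R a2))"
  define b where "b = (if r1 + r2 = 0 then 0 else (1/(r1+r2)) *\<^sub>R (r1 *\<^sub>R b1 + r2 *\<^sub>R b2))"
  have hP: "w * qf P a \<le> s1 * qf P a1 + s2 * qf P a2"
    and ha: "w *\<^sub>R a = s1 *\<^sub>R a1 + s2 *\<^sub>R a2"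
    using persp[OF sP pP s0(1,2) a_def] ss by auto
  have hR: "(1-w) * qf R b \<le> r1 * qf R b1 + r2 * qf R b2"
    and hb: "(1-w) *\<^sub>R b = r1 *\<^sub>R b1 + r2 *\<^sub>R b2"
    using persp[OF sR pR s0(3,4) b_def] rr by auto
  have hQ: "w^2 * qf Q a \<le> u * (w1^2 * qf Q a1) + v * (w2^2 * qf Q a2)"
  proof -
    have "w^2 * qf Q a = qf Q (w *\<^sub>R a)" by (simp add: qf_scale)
    also have "w *\<^sub>R a = u *\<^sub>R (w1 *\<^sub>R a1) + v *\<^sub>R (w2 *\<^sub>R a2)"
      using ha by (simp add: s1_def s2_def)
    also have "qf Q \<dots> \<le> u * qf Q (w1 *\<^sub>R a1) + v * qf Q (w2 *\<^sub>R a2)"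
      by (rule qf_quad_convex[OF sQ pQ u v uv])
    finally show ?thesis by (simp add: qf_scale)
  qed
  have hT: "(1-w)^2 * qf T b \<le> u * ((1-w1)^2 * qf T b1) + v * ((1-w2)^2 * qf T b2)"
  proof -
    have "(1-w)^2 * qf T b = qf T ((1-w) *\<^sub>R b)" by (simp add: qf_scale)
    also have "(1-w) *\<^sub>R b = u *\<^sub>R ((1-w1) *\<^sub>R b1) + v *\<^sub>R ((1-w2) *\<^sub>R b2)"
      using hb by (simp add: r1_def r2_def)
    also have "qf T \<dots> \<le> u * qf T ((1-w1) *\<^sub>R b1) + v * qf T ((1-w2) *\<^sub>R b2)"
      by (rule qf_quad_convex[OF sT pT u v uv])
    finally show ?thesis by (simp add: qf_scale)
  qed
  have cx: "w *\<^sub>R a + (1-w) *\<^sub>R b = x"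
  proof -
    have "w *\<^sub>R a + (1-w) *\<^sub>R b = u *\<^sub>R (w1 *\<^sub>R a1 + (1-w1) *\<^sub>R b1) + v *\<^sub>R (w2 *\<^sub>R a2 + (1-w2) *\<^sub>R b2)"
      unfolding ha hb s1_def s2_def r1_def r2_def by (simp add: algebra_simps)
    also have "\<dots> = x" using c1 c2 uv by (simp add: scaleR_left_distrib[symmetric])
    finally show ?thesis .
  qed
  obtain a0 b0 where "\<forall>a' b'. w *\<^sub>R a' + (1-w) *\<^sub>R b' = x \<longrightarrow>
              g w \<le> w * qf P a' + w^2 * qf Q a' + (1-w) * qf R b' + (1-w)^2 * qf T b'"
    using opt[OF w01] by blast
  then have gw: "g w \<le> w * qf P a + w^2 * qf Q a + (1-w) * qf R b + (1-w)^2 * qf T b"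
    using cx by blast
  have "g w \<le> u * g w1 + v * g w2"
    using gw hP hQ hR hT unfolding g1 g2 s1_def s2_def r1_def r2_def
    by (simp add: algebra_simps)
  then show "g (u *\<^sub>R w1 + v *\<^sub>R w2) \<le> u * g w1 + v * g w2"
    by (simp add: w_def)
qed


lemma inv_of_pd:
  fixes M :: "real^'n^'n"
  assumes pd: "\<forall>y. y \<noteq> 0 \<longrightarrow> qf M y > 0"
  shows "M ** matrix_inv M = mat 1 \<and> matrix_inv M ** M = mat 1"
proof -
  have "\<forall>y. M *v y = 0 \<longrightarrow> y = 0"
  proof (intro allI impI)
    fix y assume "M *v y = 0"
    then have "qf M y = 0" by (simp add: qf_def)
    then show "y = 0" using pd by (metis less_irrefl)
  qed
  then have "\<exists>B. B ** M = mat 1" using matrix_left_invertible_ker by blast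
  then have "invertible M" using invertible_left_inverse by blast
  then have "\<exists>A'. M ** A' = mat 1 \<and> A' ** M = mat 1" unfolding invertible_def .
  then show ?thesis unfolding matrix_inv_def by (rule someI_ex)
qed

lemma spd_facts:
  fixes M :: "real^'n^'n"
  assumes "spd M"
  shows "symm M" "psd M" "\<forall>y. y \<noteq> 0 \<longrightarrow> qf M y > 0"
proof -
  show "symm M" using assms transpose_symm spd_def by blast
  show pd: "\<forall>y. y \<noteq> 0 \<longrightarrow> qf M y > 0" using assms unfolding spd_def qf_def by blast
  show "psd M" unfolding psd_def
  proof
    fix y show "0 \<le> qf M y" using pd by (cases "y = 0") (auto simp: qf_def intro: less_imp_le)
  qed
qed

lemma convex_on_sum_fun:
  fixes f :: "'i \<Rightarrow> real \<Rightarrow> real"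
  assumes "finite I" "convex S" "\<And>i. i \<in> I \<Longrightarrow> convex_on S (f i)"
  shows "convex_on S (\<lambda>w. \<Sum>i\<in>I. f i w)"
  using assms
proof (induction I rule: finite_induct)
  case empty
  then show ?case by (simp add: convex_on_const)
next
  case (insert i I)
  then show ?case by (simp add: convex_on_add)
qed

lemma trace_as_sum:
  fixes B :: "real^'n^'n"
  shows "trace B = (\<Sum>i\<in>UNIV. axis i 1 \<bullet> (B *v axis i 1))"
  unfolding trace_def
proof (rule sum.cong[OF refl])
  fix i :: 'n
  have "axis i 1 \<bullet> (B *v axis i 1) = (B *v axis i 1) $ i"
    by (metis cart_eq_inner_axis inner_commute)
  also have "\<dots> = B $ i $ i" by (simp add: matrix_vector_mult_basis column_def)
  finally show "B $ i $ i = axis i 1 \<bullet> (B *v axis i 1)" by simp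
qed


lemma pd_inv_pos:
  fixes M :: "real^'n^'n"
  assumes pd: "\<forall>y. y \<noteq> 0 \<longrightarrow> qf M y > 0" and y: "y \<noteq> 0"
  shows "y \<bullet> (matrix_inv M *v y) > 0"
proof -
  define z where "z = matrix_inv M *v y"
  have Mz: "M *v z = y" unfolding z_def
    using inv_of_pd[OF pd] by (simp add: matrix_vector_mul_assoc)
  have "z \<noteq> 0" using Mz y by auto
  then have "qf M z > 0" using pd by blast
  then show ?thesis unfolding z_def[symmetric] qf_def using Mz by (simp add: inner_commute)
qed

lemma pd_add:
  fixes P Q :: "real^'n^'n"
  assumes "\<forall>y. y \<noteq> 0 \<longrightarrow> qf P y > 0" "psd Q" "0 \<le> c"
  shows "\<forall>y. y \<noteq> 0 \<longrightarrow> qf (P + c *\<^sub>R Q) y > 0"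
proof (intro allI impI)
  fix y :: "real^'n" assume "y \<noteq> 0"
  then have "qf P y > 0" using assms by blast
  moreover have "0 \<le> c * qf Q y" using assms unfolding psd_def by simp
  ultimately show "qf (P + c *\<^sub>R Q) y > 0" by (simp add: qf_add_mat)
qed

lemma pd_psd: "\<forall>y. y \<noteq> 0 \<longrightarrow> qf M y > 0 \<Longrightarrow> psd M"
  unfolding psd_def by (metis less_eq_real_def order_refl qf_def inner_zero_left)

lemma per_x:
  fixes PA PB QA QB :: "real^'n^'n" and x :: "real^'n"
  assumes "spd PA" and "spd PB" and "spd QA" and "spd QB"
  shows "convex_on {0..1} (\<lambda>w. x \<bullet> (B_SCI PA PB QA QB w *v x))"
proof -
  note A = spd_facts[OF assms(1)] and B = spd_facts[OF assms(2)]
    and C = spd_facts[OF assms(3)] and D = spd_facts[OF assms(4)]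
  show ?thesis
  proof (rule conv_abs[OF A(1,2) C(1,2) B(1,2) D(1,2)])
    fix w :: real assume w: "w \<in> {0..1}"
    define MA where "MA = PA + w *\<^sub>R QA"
    define MB where "MB = PB + (1-w) *\<^sub>R QB"
    define IA where "IA = matrix_inv MA"
    define IB where "IB = matrix_inv MB"
    define S where "S = w *\<^sub>R IA + (1-w) *\<^sub>R IB"
    define Bm where "Bm = matrix_inv S"
    define u where "u = Bm *v x"
    define a where "a = IA *v u"
    define b where "b = IB *v u"
    have pdA: "\<forall>y. y \<noteq> 0 \<longrightarrow> qf MA y > 0" unfolding MA_def
      using pd_add[OF A(3) C(2)] w by simp
    have pdB: "\<forall>y. y \<noteq> 0 \<longrightarrow> qf MB y > 0" unfolding MB_def
      using pd_add[OF B(3) D(2)] w by simp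
    have sA: "symm MA" unfolding MA_def by (rule symm_add_mat[OF A(1) C(1)])
    have sB: "symm MB" unfolding MB_def by (rule symm_add_mat[OF B(1) D(1)])
    have iA: "MA ** IA = mat 1" unfolding IA_def using inv_of_pd[OF pdA] by simp
    have iB: "MB ** IB = mat 1" unfolding IB_def using inv_of_pd[OF pdB] by simp
    have pdS: "\<forall>y. y \<noteq> 0 \<longrightarrow> qf S y > 0"
    proof (intro allI impI)
      fix y :: "real^'n" assume y: "y \<noteq> 0"
      have p1: "y \<bullet> (IA *v y) > 0" unfolding IA_def by (rule pd_inv_pos[OF pdA y])
      have p2: "y \<bullet> (IB *v y) > 0" unfolding IB_def by (rule pd_inv_pos[OF pdB y])
      have e: "qf S y = w * (y \<bullet> (IA *v y)) + (1-w) * (y \<bullet> (IB *v y))"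
        unfolding S_def qf_def by (simp add: matrix_vector_mult_add_rdistrib smat_vec inner_add_right)
      show "qf S y > 0"
      proof (cases "w = 0")
        case True then show ?thesis using e p2 by simp
      next
        case False
        then have "w > 0" using w by simp
        moreover have "0 \<le> (1-w) * (y \<bullet> (IB *v y))" using w p2 by simp
        ultimately show ?thesis using e p1 by (smt (verit) mult_pos_pos)
      qed
    qed
    have iS: "S ** Bm = mat 1" unfolding Bm_def using inv_of_pd[OF pdS] by simp
    have BmB: "Bm = B_SCI PA PB QA QB w"
      unfolding Bm_def S_def IA_def IB_def MA_def MB_def B_SCI_def by simp
    have w0: "0 \<le> w" and w1: "w \<le> 1" using w by auto
    note O = opt[OF sA sB pd_psd[OF pdA] pd_psd[OF pdB] iA iB S_def iS w0 w1 u_def a_def b_def]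
    have qA: "\<And>a. w * qf MA a = w * qf PA a + w^2 * qf QA a"
      unfolding MA_def qf_add_mat by (simp add: power2_eq_square algebra_simps)
    have qB: "\<And>b. (1-w) * qf MB b = (1-w) * qf PB b + (1-w)^2 * qf QB b"
      unfolding MB_def qf_add_mat by (simp add: power2_eq_square algebra_simps)
    show "\<exists>a b. w *\<^sub>R a + (1-w) *\<^sub>R b = x
        \<and> x \<bullet> (B_SCI PA PB QA QB w *v x) = w * qf PA a + w^2 * qf QA a + (1-w) * qf PB b + (1-w)^2 * qf QB b
        \<and> (\<forall>a' b'. w *\<^sub>R a' + (1-w) *\<^sub>R b' = x \<longrightarrow>
              x \<bullet> (B_SCI PA PB QA QB w *v x) \<le> w * qf PA a' + w^2 * qf QA a' + (1-w) * qf PB b' + (1-w)^2 * qf QB b')"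
    proof (intro exI conjI)
      show "w *\<^sub>R a + (1-w) *\<^sub>R b = x" by (rule O(1))
      show "x \<bullet> (B_SCI PA PB QA QB w *v x) = w * qf PA a + w^2 * qf QA a + (1-w) * qf PB b + (1-w)^2 * qf QB b"
        using O(2) qA[of a] qB[of b] BmB by simp
      show "\<forall>a' b'. w *\<^sub>R a' + (1-w) *\<^sub>R b' = x \<longrightarrow>
              x \<bullet> (B_SCI PA PB QA QB w *v x) \<le> w * qf PA a' + w^2 * qf QA a' + (1-w) * qf PB b' + (1-w)^2 * qf QB b'"
      proof (intro allI impI)
        fix a' b' assume "w *\<^sub>R a' + (1-w) *\<^sub>R b' = x"
        then have "x \<bullet> (Bm *v x) \<le> w * qf MA a' + (1-w) * qf MB b'" using O(3) by blast
        then show "x \<bullet> (B_SCI PA PB QA QB w *v x) \<le> w * qf PA a' + w^2 * qf QA a' + (1-w) * qf PB b' + (1-w)^2 * qf QB b'"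
          using qA[of a'] qB[of b'] BmB by simp
      qed
    qed
  qed
qed

theorem lemma6:
  fixes PA PB QA QB :: "real^'n^'n"
  assumes "spd PA" and "spd PB" and "spd QA" and "spd QB"
  shows "convex_on {0..1} (\<lambda>\<omega>. trace (B_SCI PA PB QA QB \<omega>))"
proof -
  have "convex_on {0..1} (\<lambda>w. \<Sum>i\<in>UNIV. axis i 1 \<bullet> (B_SCI PA PB QA QB w *v axis i 1))"
    by (rule convex_on_sum_fun) (auto intro: per_x[OF assms] convex_real_interval)
  then show ?thesis by (simp add: trace_as_sum)
qed

end
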